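(* Let $q$ be a prime power, let $m,n\ge 1$ with $\gcd(n,q^m-1)=1$. Let $l(x)=\sum_{v=0}^{m} b_v x^{q^v}\in\mathbb{F}_q[x]$ be such that $\bar l(x)=\sum_{v=0}^m b_v x^v$ is a primitive polynomial of degree $m$ over $\mathbb{F}_q$ with $\bar l(x)\neq x-1$, and let $f(x)$ be an irreducible polynomial of degree $n$ over $\mathbb{F}_q$. Setting $b_u=0$ for $u>m$, define for $0\le i\le n-1$ $$c_i=\sum_{u=0}^{\lfloor (m+1)/n\rfloor} b_{i+nu}.$$ Suppose there is an index $i\in\{0,\ldots,n-1\}$ with $c_i\neq 0$ and $c_j=0$ for all $j\in\{0,\dots,n-1\}$, $j\ne i$. Then the polynomial $$F(x)=\frac{f\big(c_i^{-1}l(x)\big)}{f(x)}$$ of degree $n(q^m-1)$ is irreducible over $\mathbb{F}_q$.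
   Context: A primitive polynomial of degree $m$ over $\mathbb{F}_q$ is a monic irreducible polynomial of degree $m$ whose roots generate the multiplicative group $\mathbb{F}_{q^m}^*$. *)

theory Defs
  imports "HOL-Computational_Algebra.Computational_Algebra" "HOL-Library.Cardinality"
begin

text \<open>Primitive polynomial of degree m over the finite field 'a (with q = CARD('a)):
  a monic irreducible polynomial of degree m whose root generates the multiplicative
  group of F_{q^m}. The field F_{q^m} = F_q(alpha) is realised as the residue ring
  F_q[x]/(p), in which the class of x is a root of p; "generates the multiplicative
  group" means the class of x has multiplicative order q^m - 1 there.\<close>
definition primitive_poly :: "nat \<Rightarrow> 'a::{finite,field} poly \<Rightarrow> bool" where
  "primitive_poly m (p :: 'a poly) \<longleftrightarrow>
     lead_coeff p = 1 \<and> degree p = m \<and> irreducible p \<and>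
     [:0, 1:] ^ (CARD('a) ^ m - 1) mod p = 1 \<and>
     (\<forall>k. 0 < k \<and> k < CARD('a) ^ m - 1 \<longrightarrow> [:0, 1:] ^ k mod p \<noteq> 1)"

definition linearized :: "'a::{finite,field} poly \<Rightarrow> 'a poly" where
  "linearized (lb :: 'a poly) = (\<Sum>v\<le>degree lb. monom (coeff lb v) (CARD('a) ^ v))"

end

theory Submission
  imports Defs "HOL-Algebra.Algebraic_Closure_Type"
begin
hide_const (open) Divisibility.irreducible Divisibility.prime Polynomials.degree up_ring.monom up_ring.coeff module.smult Polynomials.lead_coeff

lemma card_ge2: "CARD('a::{finite,field}) \<ge> 2"
proof -
  have "{0::'a, 1} \<subseteq> UNIV" by simp
  hence "card {0::'a,1} \<le> CARD('a)" by (intro card_mono) auto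
  thus ?thesis by simp
qed

lemma ff_pow: "(c::'a::{finite,field}) ^ CARD('a) = c"
proof (cases "c = 0")
  case False
  have "c * (\<Prod>y\<in>UNIV-{0}. c * y) = c * c ^ (card (UNIV :: 'a set) - 1) * \<Prod>(UNIV-{0})"
    by (simp add: prod.distrib mult_ac)
  also have "c * c ^ (card (UNIV :: 'a set) - 1) = c ^ Suc (card (UNIV :: 'a set) - 1)"
    by (subst power_Suc) auto
  also have "Suc (card (UNIV :: 'a set) - 1) = card (UNIV :: 'a set)"
    using finite_UNIV_card_ge_0[where ?'a = 'a] by simp
  also have "(\<Prod>y\<in>UNIV-{0}. c * y) = (\<Prod>y\<in>UNIV-{0}. y)"
    by (rule prod.reindex_bij_witness[of _ "\<lambda>y. y / c" "\<lambda>y. c * y"]) (use False in auto)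
  finally show ?thesis
    by simp
qed (use finite_UNIV_card_ge_0[where ?'a = 'a] in auto)

lemma ff_pow_pow: "(c::'a::{finite,field}) ^ (CARD('a) ^ t) = c"
  by (induction t) (simp_all add: power_mult ff_pow)

lemma choose_zero:
  assumes "0 < j" "j < CARD('a::{finite,field})"
  shows "of_nat (CARD('a) choose j) = (0::'a)"
proof -
  define q where "q = CARD('a)"
  define bp where "bp = (\<Sum>k\<in>{1..<q}. monom (of_nat (q choose k) :: 'a) k)"
  have q2: "q \<ge> 2" using card_ge2[where 'a='a] q_def by simp
  have roots: "poly bp y = 0" for y :: 'a
  proof -
    have "(y + 1) ^ q = (\<Sum>k\<le>q. of_nat (q choose k) * y ^ k * 1 ^ (q - k))"
      by (rule binomial_ring)
    also have "{..q} = insert 0 (insert q {1..<q})" using q2 by auto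
    also have "(\<Sum>k\<in>insert 0 (insert q {1..<q}). of_nat (q choose k) * y ^ k * 1 ^ (q - k))
       = 1 + (y ^ q + (\<Sum>k\<in>{1..<q}. of_nat (q choose k) * y ^ k))"
      using q2 by (simp add: sum.insert)
    finally have "(y + 1) ^ q = 1 + (y ^ q + poly bp y)"
      by (simp add: bp_def poly_sum poly_monom)
    moreover have "(y+1)^q = y + 1" "y ^ q = y" using ff_pow q_def by auto
    ultimately show ?thesis by simp
  qed
  have deg: "degree bp \<le> q - 1"
    unfolding bp_def
    by (rule degree_sum_le) (auto intro: order.trans[OF degree_monom_le])
  have "bp = 0"
  proof (rule ccontr)
    assume "bp \<noteq> 0"
    hence "card {x. poly bp x = 0} \<le> degree bp" by (rule card_poly_roots_bound)
    thus False using roots deg q_def q2 by simp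
  qed
  hence "coeff bp j = 0" by simp
  moreover have "coeff bp j = of_nat (q choose j)"
    unfolding bp_def coeff_sum coeff_monom using assms q_def by (simp add: sum.delta)
  ultimately show ?thesis using q_def by simp
qed

lemma of_nat_card_zero: "of_nat CARD('a::{finite,field}) = (0::'a)"
  using choose_zero[of 1, where 'a='a] card_ge2[where 'a='a] by simp

lemma frob_add: "(u + w :: 'a::{finite,field} alg_closure) ^ CARD('a) = u ^ CARD('a) + w ^ CARD('a)"
proof -
  define q where "q = CARD('a)"
  have q2: "q \<ge> 2" using card_ge2[where 'a='a] q_def by simp
  have "(u + w) ^ q = (\<Sum>k\<le>q. of_nat (q choose k) * u ^ k * w ^ (q - k))"
    by (rule binomial_ring)
  also have "{..q} = insert 0 (insert q {1..<q})" using q2 by auto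
  also have "(\<Sum>k\<in>insert 0 (insert q {1..<q}). of_nat (q choose k) * u ^ k * w ^ (q - k))
       = w ^ q + (u ^ q + (\<Sum>k\<in>{1..<q}. of_nat (q choose k) * u ^ k * w ^ (q - k)))"
    using q2 by simp
  also have "(\<Sum>k\<in>{1..<q}. of_nat (q choose k) * u ^ k * w ^ (q - k)) = 0"
  proof (rule sum.neutral, rule ballI)
    fix k assume "k \<in> {1..<q}"
    hence "of_nat (q choose k) = (0::'a)" using choose_zero[of k, where 'a='a] q_def by auto
    hence "(of_nat (q choose k) :: 'a alg_closure) = 0"
      by (metis to_ac_0 to_ac_of_nat)
    thus "of_nat (q choose k) * u ^ k * w ^ (q - k) = 0" by simp
  qed
  finally show ?thesis using q_def by (simp add: add.commute)
qed

lemma frob_pow_add: "(u + w :: 'a::{finite,field} alg_closure) ^ (CARD('a)^t) = u ^ (CARD('a)^t) + w ^ (CARD('a)^t)"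
proof (induction t)
  case (Suc t)
  have "(u + w) ^ (CARD('a)^Suc t) = ((u+w) ^ (CARD('a)^t)) ^ CARD('a)"
    by (simp add: power_mult[symmetric] mult.commute)
  also have "\<dots> = (u ^ (CARD('a)^t)) ^ CARD('a) + (w ^ (CARD('a)^t)) ^ CARD('a)"
    using Suc frob_add by simp
  finally show ?case by (simp add: power_mult[symmetric] mult.commute)
qed simp

lemma frob_pow_diff: "(u - w :: 'a::{finite,field} alg_closure) ^ (CARD('a)^t) = u ^ (CARD('a)^t) - w ^ (CARD('a)^t)"
proof -
  have "u ^ (CARD('a)^t) = ((u - w) + w) ^ (CARD('a)^t)" by simp
  also have "\<dots> = (u - w) ^ (CARD('a)^t) + w ^ (CARD('a)^t)" by (rule frob_pow_add)
  finally show ?thesis by simp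
qed

lemma frob_pow_sum: "(\<Sum>x\<in>A. f x :: 'a::{finite,field} alg_closure) ^ (CARD('a)^t) = (\<Sum>x\<in>A. f x ^ (CARD('a)^t))"
  by (induction A rule: infinite_finite_induct) (simp_all add: frob_pow_add)

lemma frob_pow_inj: 
  assumes "(u :: 'a::{finite,field} alg_closure) ^ (CARD('a)^t) = w ^ (CARD('a)^t)"
  shows "u = w"
proof -
  have "(u - w) ^ (CARD('a)^t) = u ^ (CARD('a)^t) - w ^ (CARD('a)^t)" by (rule frob_pow_diff)
  hence "(u - w) ^ (CARD('a)^t) = 0" using assms by simp
  thus ?thesis by simp
qed

lemma to_ac_frob: "to_ac (c::'a::{finite,field}) ^ (CARD('a)^t) = to_ac c"
  by (metis ff_pow_pow to_ac_power)

lemma pow_pow_card: "((z::'b::comm_semiring_1) ^ (CARD('a)^a)) ^ (CARD('a)^b) = z ^ (CARD('a)^(a+b))"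
  by (simp only: power_mult[symmetric] power_add[symmetric])

definition E :: "'a::field poly \<Rightarrow> 'a alg_closure \<Rightarrow> 'a alg_closure" where
  "E p z = poly (map_poly to_ac p) z"

lemma map_poly_to_ac_add: "map_poly to_ac (p + q) = map_poly to_ac p + map_poly to_ac q"
  by (rule poly_eqI) (simp add: coeff_map_poly)

lemma map_poly_to_ac_diff: "map_poly to_ac (p - q) = map_poly to_ac p - map_poly to_ac q"
  by (rule poly_eqI) (simp add: coeff_map_poly)

lemma map_poly_to_ac_mult: "map_poly to_ac (p * q) = map_poly to_ac p * map_poly to_ac q"
  by (rule poly_eqI) (simp add: coeff_map_poly coeff_mult to_ac_sum)


lemma E_add: "E (p + q) z = E p z + E q z"
  unfolding E_def by (simp add: map_poly_to_ac_add)
lemma E_diff: "E (p - q) z = E p z - E q z"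
  unfolding E_def by (simp add: map_poly_to_ac_diff)
lemma E_mult: "E (p * q) z = E p z * E q z"
  unfolding E_def by (simp add: map_poly_to_ac_mult)
lemma E_0: "E 0 z = 0"
  unfolding E_def by simp
lemma E_pCons: "E (pCons a p) z = to_ac a + z * E p z"
  unfolding E_def by (simp add: map_poly_pCons)
lemma E_const: "E [:c:] z = to_ac c"
  by (simp add: E_pCons E_0)
lemma E_1: "E 1 z = 1"
  unfolding E_def by simp
lemma E_X: "E [:0,1:] z = z"
  by (simp add: E_pCons E_0)
lemma E_smult: "E (smult c p) z = to_ac c * E p z"
  unfolding E_def by (simp add: map_poly_smult)
lemma E_monom: "E (monom c k) z = to_ac c * z ^ k"
  unfolding E_def by (simp add: map_poly_monom poly_monom)
lemma E_sum: "E (\<Sum>x\<in>A. f x) z = (\<Sum>x\<in>A. E (f x) z)"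
  by (induction A rule: infinite_finite_induct) (simp_all add: E_0 E_add)
lemma E_power: "E (p ^ k) z = E p z ^ k"
  by (induction k) (simp_all add: E_1 E_mult)
lemma E_pcompose: "E (pcompose p r) z = E p (E r z)"
  by (induction p) (simp_all add: pcompose_pCons E_pCons E_add E_mult E_const E_0)

lemma E_frob: "E g z ^ (CARD('a)^t) = E g (z ^ (CARD('a)^t))" for g :: "'a::{finite,field} poly"
  by (induction g) (simp_all add: E_pCons E_0 frob_pow_add to_ac_frob power_mult_distrib)

lemma degree_map_to_ac: "degree (map_poly to_ac p) = degree p"
  by (rule degree_map_poly) simp

lemma E_root_exists:
  assumes "degree p > 0"
  shows "\<exists>z. E p z = 0"
  unfolding E_def using alg_closed_imp_poly_has_root[of "map_poly to_ac p"] assms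
  by (simp add: degree_map_to_ac)

lemma card_deg_less_Suc:
  "finite {a::'a::{finite,field} poly. degree a < Suc n} \<and> card {a::'a poly. degree a < Suc n} = CARD('a) ^ Suc n"
proof (induction n)
  case 0
  have eq: "{a::'a poly. degree a < Suc 0} = (\<lambda>c. [:c:]) ` UNIV"
    by (auto intro: degree_0_id[symmetric])
  have inj: "inj (\<lambda>c::'a. [:c:])" by (auto intro: injI)
  show ?case unfolding eq using card_image[OF inj] by simp
next
  case (Suc n)
  have eq: "{a::'a poly. degree a < Suc (Suc n)} = (\<lambda>(c,p). pCons c p) ` (UNIV \<times> {p. degree p < Suc n})"
  proof (intro equalityI subsetI)
    fix a :: "'a poly" assume "a \<in> {a. degree a < Suc (Suc n)}"
    then obtain c p where "a = pCons c p" "degree (pCons c p) < Suc (Suc n)" by (cases a) auto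
    thus "a \<in> (\<lambda>(c,p). pCons c p) ` (UNIV \<times> {p. degree p < Suc n})"
      by (auto split: if_splits)
  next
    fix a :: "'a poly" assume "a \<in> (\<lambda>(c,p). pCons c p) ` (UNIV \<times> {p. degree p < Suc n})"
    thus "a \<in> {a. degree a < Suc (Suc n)}" by auto
  qed
  have inj: "inj_on (\<lambda>(c,p). pCons c p) (UNIV \<times> {p::'a poly. degree p < Suc n})"
    by (auto intro: inj_onI)
  show ?case unfolding eq using Suc card_image[OF inj]
    by (simp add: card_cartesian_product)
qed

lemma card_deg_less:
  assumes "n \<ge> 1"
  shows "finite {a::'a::{finite,field} poly. degree a < n}" "card {a::'a poly. degree a < n} = CARD('a) ^ n"
  using card_deg_less_Suc[of "n - 1", where 'a='a] assms by auto

lemma irr_degree_pos: "irreducible (f::'a::field poly) \<Longrightarrow> degree f > 0"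
proof -
  assume "irreducible f"
  hence "f \<noteq> 0" "\<not> is_unit f" by (auto simp: Factorial_Ring.irreducible_def)
  thus ?thesis using is_unit_iff_degree by auto
qed

lemma E_mod: 
  assumes "E f z = 0"
  shows "E (a mod f) z = E a z"
proof -
  have "E a z = E (a div f * f + a mod f) z" by (simp only: div_mult_mod_eq)
  thus ?thesis using assms by (simp only: E_add E_mult) simp
qed

lemma irr_root_dvd:
  fixes f g :: "'a::field poly"
  assumes irr: "irreducible f" and rf: "E f z = 0" and rg: "E g z = 0"
  shows "f dvd g"
proof -
  define I where "I = {h. E h z = 0 \<and> h \<noteq> 0}"
  have "f \<in> I" using irr rf unfolding I_def by (auto simp: Factorial_Ring.irreducible_def)
  then obtain m0 where m0: "m0 \<in> I" and mn: "\<And>h. h \<in> I \<Longrightarrow> degree m0 \<le> degree h"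
    using ex_has_least_nat[of "\<lambda>h. h \<in> I" f degree] by blast
  have dv: "m0 dvd h" if "E h z = 0" for h
  proof (rule ccontr)
    assume "\<not> m0 dvd h"
    hence nz: "h mod m0 \<noteq> 0" by (simp add: mod_eq_0_iff_dvd)
    have "E m0 z = 0" "m0 \<noteq> 0" using m0 unfolding I_def by auto
    hence "E (h mod m0) z = 0" using E_mod[of m0 z h] that by simp
    hence "h mod m0 \<in> I" using nz unfolding I_def by auto
    hence "degree m0 \<le> degree (h mod m0)" by (rule mn)
    moreover have "degree (h mod m0) < degree m0" using degree_mod_less'[OF \<open>m0 \<noteq> 0\<close> nz] .
    ultimately show False by simp
  qed
  from dv[OF rf] obtain c where fc: "f = m0 * c" by (auto elim: dvdE)
  have "\<not> is_unit m0"
  proof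
    assume "is_unit m0"
    hence "degree m0 = 0" using m0 unfolding I_def by (simp add: is_unit_iff_degree)
    then obtain c0 where "m0 = [:c0:]" by (rule degree_eq_zeroE)
    thus False using m0 unfolding I_def by (auto simp: E_const)
  qed
  hence "is_unit c" using irr fc by (auto simp: Factorial_Ring.irreducible_def)
  hence "f dvd m0" using fc by (simp add: mult_unit_dvd_iff')
  thus ?thesis using dv[OF rg] by (rule dvd_trans)
qed

lemma S_props:
  fixes f :: "'a::{finite,field} poly"
  assumes irr: "irreducible f" and deg: "degree f = n" and root: "E f z = 0"
  defines "S \<equiv> (\<lambda>a. E a z) ` {a. degree a < n}"
  shows "finite S" "card S = CARD('a) ^ n" "\<And>a. E a z \<in> S"
proof -
  have n1: "n \<ge> 1" using irr_degree_pos[OF irr] deg by simp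
  have f0: "f \<noteq> 0" using irr by auto
  note cd = card_deg_less[OF n1, where 'a='a]
  show "finite S" unfolding S_def using cd by simp
  have inj: "inj_on (\<lambda>a. E a z) {a. degree a < n}"
  proof (rule inj_onI)
    fix a b :: "'a poly" assume ab: "a \<in> {a. degree a < n}" "b \<in> {a. degree a < n}" "E a z = E b z"
    hence "E (a - b) z = 0" by (simp add: E_diff)
    hence dv: "f dvd a - b" using irr_root_dvd[OF irr root] by blast
    have dl: "degree (a - b) < n" using ab by (auto intro: degree_diff_less)
    show "a = b"
    proof (rule ccontr)
      assume "a \<noteq> b"
      hence "degree f \<le> degree (a - b)" using dv by (intro dvd_imp_degree_le) auto
      thus False using dl deg by simp
    qed
  qed
  show "card S = CARD('a) ^ n" unfolding S_def using card_image[OF inj] cd by simp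
  fix a :: "'a poly"
  have "degree (a mod f) < n" using degree_mod_less[OF f0, of a] deg n1 by auto
  hence "E (a mod f) z \<in> S" unfolding S_def by blast
  thus "E a z \<in> S" using E_mod[OF root] by simp
qed

lemma lemmaA:
  fixes f :: "'a::{finite,field} poly"
  assumes irr: "irreducible f" and deg: "degree f = n" and root: "E f z = 0"
  shows "z ^ (CARD('a) ^ n) = z"
proof (cases "z = 0")
  case True
  have "CARD('a) ^ n > 0" by simp
  thus ?thesis using True by simp
next
  case False
  define S where "S = (\<lambda>a. E a z) ` {a. degree a < n}"
  note SP = S_props[OF irr deg root, folded S_def]
  define S0 where "S0 = S - {0}"
  have fin: "finite S0" using SP unfolding S0_def by simp
  have zS: "z \<in> S0" using SP(3)[of "[:0,1:]"] False unfolding S0_def by (simp add: E_X)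
  have mulS: "u * w \<in> S" if uS: "u \<in> S" and wS: "w \<in> S" for u w
  proof -
    obtain a where a: "u = E a z" using uS unfolding S_def by auto
    obtain b where b: "w = E b z" using wS unfolding S_def by auto
    show ?thesis using a b SP(3)[of "a*b"] by (simp add: E_mult)
  qed
  have img: "(\<lambda>s. z * s) ` S0 = S0"
  proof (rule endo_inj_surj[OF fin])
    show "(\<lambda>s. z * s) ` S0 \<subseteq> S0" using mulS zS False unfolding S0_def by auto
    show "inj_on (\<lambda>s. z * s) S0" using False by (auto intro: inj_onI)
  qed
  have "prod (\<lambda>s. s) S0 = prod (\<lambda>s. s) ((\<lambda>s. z * s) ` S0)" using img by simp
  also have "\<dots> = prod (\<lambda>s. z * s) S0"
    by (subst prod.reindex) (use False in \<open>auto intro: inj_onI\<close>)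
  also have "\<dots> = z ^ card S0 * prod (\<lambda>s. s) S0"
    by (simp add: prod.distrib)
  finally have eq: "prod (\<lambda>s. s) S0 = z ^ card S0 * prod (\<lambda>s. s) S0" .
  have "prod (\<lambda>s. s) S0 \<noteq> 0" using fin unfolding S0_def by (simp add: prod_zero_iff)
  hence "z ^ card S0 = 1" using eq by simp
  moreover have "card S0 = CARD('a) ^ n - 1"
  proof -
    have "0 \<in> S" using SP(3)[of 0] by (simp add: E_0)
    thus ?thesis unfolding S0_def using SP by (simp add: card_Diff_singleton)
  qed
  ultimately have "z ^ (CARD('a) ^ n - 1) = 1" by simp
  hence "z * z ^ (CARD('a) ^ n - 1) = z" by simp
  moreover have "CARD('a) ^ n = Suc (CARD('a) ^ n - 1)" by simp
  ultimately show ?thesis by (metis power_Suc)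
qed

lemma period_mult:
  assumes "(z::'b::comm_semiring_1) ^ (CARD('a) ^ a) = z"
  shows "z ^ (CARD('a) ^ (a * t)) = z"
proof (induction t)
  case (Suc t)
  have "z ^ (CARD('a) ^ (a * Suc t)) = (z ^ (CARD('a) ^ (a * t))) ^ (CARD('a) ^ a)"
    using pow_pow_card[of z "a*t" a, where 'a='a] by (simp add: add.commute)
  thus ?case using Suc assms by simp
qed simp

lemma period_dvd:
  fixes f :: "'a::{finite,field} poly"
  assumes irr: "irreducible f" and deg: "degree f = n" and root: "E f z = 0"
    and per: "z ^ (CARD('a) ^ k) = z" and k0: "k > 0"
  shows "n dvd k"
proof -
  define q where "q = CARD('a)"
  have q2: "q \<ge> 2" using card_ge2[where 'a='a] q_def by simp
  have n1: "n \<ge> 1" using irr_degree_pos[OF irr] deg by simp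
  define e where "e = gcd k n"
  have e0: "e > 0" using k0 e_def by simp
  obtain x y where xy: "k * x = n * y + e" using bezout_nat[of k n] k0 e_def by blast
  have A: "z ^ (q ^ n) = z" using lemmaA[OF irr deg root] q_def by simp
  have "z = z ^ (q ^ (k * x))" using period_mult[OF per, of x] q_def by simp
  also have "\<dots> = (z ^ (q ^ (n * y))) ^ (q ^ e)" using xy pow_pow_card[of z "n*y" e, where 'a='a] q_def by simp
  also have "\<dots> = z ^ (q ^ e)" using period_mult[of z n y, where 'a='a] A q_def by simp
  finally have ze: "z ^ (q ^ e) = z" by simp
  define S where "S = (\<lambda>a. E a z) ` {a. degree a < n}"
  note SP = S_props[OF irr deg root, folded S_def]
  define Q where "Q = monom (1::'a alg_closure) (q ^ e) - [:0,1:]"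
  have "q ^ 1 \<le> q ^ e" by (rule power_increasing) (use e0 q2 in auto)
  hence qe: "q ^ e \<ge> 2" using q2 by simp
  have dQ: "degree Q = q ^ e"
  proof -
    have "Q = monom 1 (q^e) + - [:0,1:]" unfolding Q_def by simp
    also have "degree \<dots> = degree (monom (1::'a alg_closure) (q^e))"
      by (rule degree_add_eq_left) (use qe in \<open>simp add: degree_monom_eq\<close>)
    finally show ?thesis by (simp add: degree_monom_eq)
  qed
  have Q0: "Q \<noteq> 0" proof assume "Q = 0" thus False using dQ qe q2 by simp qed
  have sub: "S \<subseteq> {w. poly Q w = 0}"
  proof
    fix s assume "s \<in> S"
    then obtain a where "s = E a z" unfolding S_def by auto
    hence "s ^ (q ^ e) = s" using E_frob[of a z e] ze q_def by simp
    thus "s \<in> {w. poly Q w = 0}" unfolding Q_def by (simp add: poly_monom)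
  qed
  have "q ^ n = card S" using SP q_def by simp
  also have "\<dots> \<le> card {w. poly Q w = 0}" by (rule card_mono[OF poly_roots_finite[OF Q0] sub])
  also have "\<dots> \<le> q ^ e" using card_poly_roots_bound[OF Q0] dQ by simp
  finally have "q ^ n \<le> q ^ e" .
  moreover have "1 < q" using q2 by simp
  ultimately have "n \<le> e" using power_le_imp_le_exp by blast
  moreover have "e dvd n" "e dvd k" unfolding e_def by simp_all
  ultimately have "e = n" using n1 by (simp add: dvd_imp_le le_antisym)
  thus ?thesis using \<open>e dvd k\<close> by simp
qed

lemma irr_ideal_dvd:
  fixes f g :: "'a::field poly"
  assumes irr: "irreducible f" and Pf: "P f" and Pg: "P g"
    and mult: "\<And>a h. P h \<Longrightarrow> P (a * h)"
    and diff: "\<And>h1 h2. P h1 \<Longrightarrow> P h2 \<Longrightarrow> P (h1 - h2)"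
    and const: "\<And>c. c \<noteq> 0 \<Longrightarrow> \<not> P [:c:]"
  shows "f dvd g"
proof -
  define I where "I = {h. P h \<and> h \<noteq> 0}"
  have "f \<in> I" using irr Pf unfolding I_def by auto
  then obtain m0 where m0: "m0 \<in> I" and mn: "\<And>h. h \<in> I \<Longrightarrow> degree m0 \<le> degree h"
    using ex_has_least_nat[of "\<lambda>h. h \<in> I" f degree] by blast
  have dv: "m0 dvd h" if Ph: "P h" for h
  proof (rule ccontr)
    assume "\<not> m0 dvd h"
    hence nz: "h mod m0 \<noteq> 0" by (simp add: mod_eq_0_iff_dvd)
    have "P m0" "m0 \<noteq> 0" using m0 unfolding I_def by auto
    have "P (h - h div m0 * m0)" using diff[OF Ph mult[OF \<open>P m0\<close>]] .
    hence "P (h mod m0)" by (simp add: minus_div_mult_eq_mod)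
    hence "h mod m0 \<in> I" using nz unfolding I_def by auto
    hence "degree m0 \<le> degree (h mod m0)" by (rule mn)
    moreover have "degree (h mod m0) < degree m0" using degree_mod_less'[OF \<open>m0 \<noteq> 0\<close> nz] .
    ultimately show False by simp
  qed
  from dv[OF Pf] obtain c where fc: "f = m0 * c" by (auto elim: dvdE)
  have "\<not> is_unit m0"
  proof
    assume "is_unit m0"
    hence "degree m0 = 0" using m0 unfolding I_def by (simp add: is_unit_iff_degree)
    then obtain c0 where "m0 = [:c0:]" by (rule degree_eq_zeroE)
    thus False using m0 const unfolding I_def by auto
  qed
  hence "is_unit c" using Factorial_Ring.irreducibleD[OF irr fc] by auto
  hence "f dvd m0" using fc by (simp add: mult_unit_dvd_iff')
  thus ?thesis using dv[OF Pg] by (rule dvd_trans)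
qed

definition LS :: "nat \<Rightarrow> 'a::{finite,field} poly \<Rightarrow> 'a alg_closure \<Rightarrow> 'a alg_closure" where
  "LS N g v = (\<Sum>j\<le>N. to_ac (coeff g j) * v ^ (CARD('a) ^ j))"

definition L :: "'a::{finite,field} poly \<Rightarrow> 'a alg_closure \<Rightarrow> 'a alg_closure" where
  "L g v = LS (degree g) g v"

lemma LS_indep: "degree g \<le> N \<Longrightarrow> LS N g v = L g v"
  unfolding L_def LS_def
  by (rule sum.mono_neutral_right) (auto simp: coeff_eq_0)

lemma E_linearized: "E (linearized g) v = L g v"
  unfolding linearized_def L_def LS_def by (simp add: E_sum E_monom)

lemma L_add: "L (g + h) v = L g v + L h v"
proof -
  define N where "N = max (degree g) (degree h)"
  have "L (g + h) v = LS N (g + h) v" using degree_add_le_max[of g h] N_def by (intro LS_indep[symmetric]) auto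
  also have "\<dots> = LS N g v + LS N h v" unfolding LS_def by (simp add: sum.distrib algebra_simps)
  also have "\<dots> = L g v + L h v" by (simp add: LS_indep N_def)
  finally show ?thesis .
qed

lemma L_smult: "L (smult a g) v = to_ac a * L g v"
proof -
  have "L (smult a g) v = LS (degree g) (smult a g) v" by (intro LS_indep[symmetric]) simp
  thus ?thesis unfolding L_def LS_def by (simp add: sum_distrib_left mult.assoc)
qed

lemma L_diff: "L (g - h) v = L g v - L h v"
proof -
  have e: "g - h = g + smult (-1) h" by simp
  show ?thesis by (subst e, subst L_add, subst L_smult) simp
qed

lemma L_shift: "L (pCons 0 g) v = (L g v) ^ CARD('a)" for g :: "'a::{finite,field} poly"
proof -
  define d where "d = degree g"
  have "L (pCons 0 g) v = LS (Suc d) (pCons 0 g) v"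
    by (intro LS_indep[symmetric]) (simp add: d_def degree_pCons_le)
  also have "\<dots> = (\<Sum>j\<le>d. to_ac (coeff g j) * v ^ (CARD('a) ^ Suc j))"
    unfolding LS_def by (subst sum.atMost_Suc_shift) simp
  also have "\<dots> = (\<Sum>j\<le>d. (to_ac (coeff g j) * v ^ (CARD('a) ^ j)) ^ (CARD('a) ^ 1))"
    by (intro sum.cong refl) (simp add: power_mult_distrib to_ac_frob[of _ 1, simplified] power_mult[symmetric] mult.commute del: to_ac_power)
  also have "\<dots> = (\<Sum>j\<le>d. to_ac (coeff g j) * v ^ (CARD('a) ^ j)) ^ (CARD('a) ^ 1)"
    by (rule frob_pow_sum[symmetric])
  also have "\<dots> = (L g v) ^ CARD('a)"
    unfolding L_def LS_def d_def by simp
  finally show ?thesis .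
qed

lemma L_mult_zero: "L g v = 0 \<Longrightarrow> L (h * g) v = 0" for g h :: "'a::{finite,field} poly"
proof (induction h rule: pCons_induct)
  case (pCons a p)
  have "L (pCons a p * g) v = L (smult a g) v + L (pCons 0 (p * g)) v"
    by (simp only: mult_pCons_left L_add)
  also have "\<dots> = 0" using pCons by (simp add: L_smult L_shift)
  finally show ?case .
qed (simp add: L_def LS_def)

lemma L_const: "L [:c:] v = to_ac c * v"
  unfolding L_def LS_def by simp

lemma L_monom1: "L (monom 1 k) v = v ^ (CARD('a) ^ k)" for v :: "'a::{finite,field} alg_closure"
proof -
  have "L (monom 1 k) v = LS k (monom (1::'a) k) v" by (intro LS_indep[symmetric]) (simp add: degree_monom_le)
  also have "\<dots> = (\<Sum>j\<le>k. (if j = k then v ^ (CARD('a) ^ k) else 0))"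
    unfolding LS_def by (intro sum.cong refl) (auto simp: coeff_monom)
  finally show ?thesis by simp
qed

lemma module_dvd:
  fixes lb :: "'a::{finite,field} poly"
  assumes irr: "irreducible lb" and v0: "v \<noteq> 0" and Lv: "L lb v = 0"
    and per: "v ^ (CARD('a) ^ k) = v"
  shows "lb dvd (monom 1 k - 1)"
proof (rule irr_ideal_dvd[where P = "\<lambda>h. L h v = 0", OF irr Lv])
  have "L (monom 1 k - 1) v = v ^ (CARD('a) ^ k) - L [:1:] v" by (simp add: L_diff L_monom1 one_pCons)
  thus "L (monom 1 k - 1) v = 0" using per by (simp add: L_const)
  show "\<And>a h. L h v = 0 \<Longrightarrow> L (a * h) v = 0" by (rule L_mult_zero)
  show "\<And>h1 h2. L h1 v = 0 \<Longrightarrow> L h2 v = 0 \<Longrightarrow> L (h1 - h2) v = 0" by (simp add: L_diff)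
  show "\<And>c. c \<noteq> 0 \<Longrightarrow> L [:c:] v \<noteq> 0" using v0 by (simp add: L_const)
qed

lemma sum_div_mod_split:
  fixes g :: "nat \<Rightarrow> 'b::comm_monoid_add"
  assumes n: "n \<ge> 1"
  shows "(\<Sum>w<n * Suc M. g w) = (\<Sum>j<n. \<Sum>u\<le>M. g (j + n * u))"
proof -
  have "(\<Sum>j<n. \<Sum>u\<le>M. g (j + n * u)) = (\<Sum>(j,u)\<in>{..<n} \<times> {..M}. g (j + n * u))"
    by (rule sum.cartesian_product)
  also have "\<dots> = (\<Sum>w<n * Suc M. g w)"
  proof -
    have lt: "j + n * u < n * Suc M" if "j < n" "u \<le> M" for j u
    proof -
      have "j + n * u < n + n * u" using that by simp
      also have "\<dots> = n * Suc u" by simp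
      also have "\<dots> \<le> n * Suc M" using that by simp
      finally show ?thesis .
    qed
    have dv: "w div n \<le> M" if "w < n * Suc M" for w
    proof -
      have "w div n < Suc M" using that n by (simp add: div_less_iff_less_mult mult.commute)
      thus ?thesis by simp
    qed
    show ?thesis
      by (rule sum.reindex_bij_witness[of _ "\<lambda>w. (w mod n, w div n)" "\<lambda>(j,u). j + n * u"])
         (use n lt dv in auto)
  qed
  finally show ?thesis by simp
qed

lemma period_mod:
  assumes "(z::'b::comm_semiring_1) ^ (CARD('a) ^ n) = z"
  shows "z ^ (CARD('a) ^ w) = z ^ (CARD('a) ^ (w mod n))"
proof -
  have "z ^ (CARD('a) ^ w) = (z ^ (CARD('a) ^ (n * (w div n)))) ^ (CARD('a) ^ (w mod n))"
    using pow_pow_card[of z "n * (w div n)" "w mod n", where 'a='a] by simp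
  also have "\<dots> = z ^ (CARD('a) ^ (w mod n))" using period_mult[OF assms] by simp
  finally show ?thesis .
qed

lemma regroup:
  fixes lb :: "'a::{finite,field} poly"
  assumes deg: "degree lb = m" and n: "n \<ge> 1" and i: "i < n"
    and cz: "\<forall>j<n. j \<noteq> i \<longrightarrow> (\<Sum>u\<le>(m + 1) div n. coeff lb (j + n * u)) = 0"
    and per: "z ^ (CARD('a) ^ n) = z"
  shows "L lb z = to_ac (\<Sum>u\<le>(m + 1) div n. coeff lb (i + n * u)) * z ^ (CARD('a) ^ i)"
proof -
  define M where "M = (m + 1) div n"
  define h where "h = (\<lambda>w. to_ac (coeff lb w) * z ^ (CARD('a) ^ (w mod n)))"
  have mM: "m < n * Suc M"
  proof -
    have "m + 1 < n * ((m + 1) div n) + n" using n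
      by (metis add.commute div_mult_mod_eq mod_less_divisor mult.commute nat_add_left_cancel_less
          less_le_trans le_refl not_one_le_zero zero_less_iff_neq_zero)
    thus ?thesis unfolding M_def by simp
  qed
  have "L lb z = LS (n * Suc M - 1) lb z" using mM deg by (intro LS_indep[symmetric]) simp
  also have "\<dots> = (\<Sum>w<n * Suc M. to_ac (coeff lb w) * z ^ (CARD('a) ^ w))"
  proof -
    have "{..n * Suc M - 1} = {..<n * Suc M}" using n by auto
    thus ?thesis unfolding LS_def by simp
  qed
  also have "\<dots> = (\<Sum>w<n * Suc M. h w)" unfolding h_def using period_mod[OF per] by simp
  also have "\<dots> = (\<Sum>j<n. \<Sum>u\<le>M. h (j + n * u))" by (rule sum_div_mod_split[OF n])
  also have "\<dots> = (\<Sum>j<n. to_ac (\<Sum>u\<le>M. coeff lb (j + n * u)) * z ^ (CARD('a) ^ j))"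
    unfolding h_def by (intro sum.cong refl) (simp add: to_ac_sum sum_distrib_right)
  also have "\<dots> = (\<Sum>j\<in>{i}. to_ac (\<Sum>u\<le>M. coeff lb (j + n * u)) * z ^ (CARD('a) ^ j))"
    by (rule sum.mono_neutral_right) (use i cz M_def in auto)
  finally show ?thesis unfolding M_def by simp
qed

lemma prim_order:
  fixes lb :: "'a::{finite,field} poly"
  assumes prim: "primitive_poly m lb" and m: "m \<ge> 1" and dv: "lb dvd (monom 1 k - 1)"
  shows "(CARD('a) ^ m - 1) dvd k"
proof -
  define Xp where "Xp = [:0, 1::'a:]"
  define M where "M = CARD('a) ^ m - 1"
  have dl: "degree lb = m" and XM: "Xp ^ M mod lb = 1" and mn: "\<And>k. 0 < k \<Longrightarrow> k < M \<Longrightarrow> Xp ^ k mod lb \<noteq> 1"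
    using prim unfolding primitive_poly_def Xp_def M_def by auto
  have one: "1 mod lb = (1::'a poly)" using dl m by (intro mod_poly_less) simp
  have "monom (1::'a) k = Xp ^ k" unfolding Xp_def by (simp add: monom_altdef)
  hence "Xp ^ k mod lb = 1 mod lb" using dv by (simp add: mod_eq_dvd_iff)
  hence Xk: "Xp ^ k mod lb = 1" using one by simp
  define r where "r = k mod M"
  have "Xp ^ k = (Xp ^ M) ^ (k div M) * Xp ^ r"
    unfolding r_def by (simp add: power_mult[symmetric] power_add[symmetric])
  hence "Xp ^ k mod lb = (((Xp ^ M) ^ (k div M)) mod lb * (Xp ^ r mod lb)) mod lb"
    by (simp add: mod_mult_eq)
  also have "((Xp ^ M) ^ (k div M)) mod lb = 1"
    by (metis XM one power_mod power_one)
  finally have "Xp ^ r mod lb = 1" using Xk by simp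
  moreover have "M > 0"
  proof -
    have "CARD('a) ^ m \<ge> CARD('a) ^ 1" using m card_ge2[where 'a='a] by (intro power_increasing) auto
    thus ?thesis using card_ge2[where 'a='a] unfolding M_def by simp
  qed
  ultimately have "r = 0" using mn[of r] unfolding r_def by (meson mod_less_divisor neq0_conv)
  thus ?thesis unfolding r_def M_def by (simp add: mod_eq_0_iff_dvd)
qed

lemma coeff_linearized: "coeff (linearized lb) j = (\<Sum>v\<le>degree lb. if CARD('a) ^ v = j then coeff lb v else 0)"
  for lb :: "'a::{finite,field} poly"
  unfolding linearized_def by (simp add: coeff_sum coeff_monom)

lemma degree_linearized:
  fixes lb :: "'a::{finite,field} poly"
  assumes "lead_coeff lb = 1"
  shows "degree (linearized lb) = CARD('a) ^ degree lb"
proof (rule antisym)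
  have q1: "CARD('a) > 1" using card_ge2[where 'a='a] by simp
  show "degree (linearized lb) \<le> CARD('a) ^ degree lb"
  proof (rule degree_le, intro allI impI)
    fix j assume j: "CARD('a) ^ degree lb < j"
    have "CARD('a) ^ v \<noteq> j" if "v \<le> degree lb" for v
    proof -
      have "CARD('a) ^ v \<le> CARD('a) ^ degree lb" using that q1 by (intro power_increasing) auto
      thus ?thesis using j by simp
    qed
    thus "coeff (linearized lb) j = 0" unfolding coeff_linearized by (intro sum.neutral) auto
  qed
  have "coeff (linearized lb) (CARD('a) ^ degree lb) = (\<Sum>v\<in>{degree lb}. coeff lb v)"
    unfolding coeff_linearized
    by (rule sum.mono_neutral_cong_right) (use q1 in auto)
  hence "coeff (linearized lb) (CARD('a) ^ degree lb) = 1" using assms by simp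
  thus "CARD('a) ^ degree lb \<le> degree (linearized lb)" by (intro le_degree) simp
qed

lemma pderiv_sum: "pderiv (\<Sum>x\<in>A. f x) = (\<Sum>x\<in>A. pderiv (f x))"
  by (induction A rule: infinite_finite_induct) (simp_all add: pderiv_add)

lemma pderiv_linearized: "pderiv (linearized lb) = [:coeff lb 0:]"
  for lb :: "'a::{finite,field} poly"
proof -
  have "pderiv (linearized lb) = (\<Sum>v\<le>degree lb. monom (of_nat (CARD('a) ^ v) * coeff lb v) (CARD('a) ^ v - 1))"
    unfolding linearized_def by (simp add: pderiv_sum pderiv_monom)
  also have "\<dots> = (\<Sum>v\<in>{0}. monom (of_nat (CARD('a) ^ v) * coeff lb v) (CARD('a) ^ v - 1))"
    by (rule sum.mono_neutral_right) (auto simp: of_nat_card_zero)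
  finally show ?thesis by (simp add: monom_0)
qed

lemma exists_irr_factor:
  fixes a :: "'a::field poly"
  shows "degree a > 0 \<Longrightarrow> \<exists>P. irreducible P \<and> P dvd a"
proof (induction "degree a" arbitrary: a rule: less_induct)
  case less
  show ?case
  proof (cases "irreducible a")
    case True thus ?thesis by (intro exI[of _ a]) simp
  next
    case False
    have a00: "a \<noteq> 0" using less.prems by auto
    have a0: "a \<noteq> 0" "\<not> is_unit a" using less.prems a00 by (auto simp: is_unit_iff_degree)
    then obtain b c where bc: "a = b * c" "\<not> is_unit b" "\<not> is_unit c"
      using False by (auto simp: Factorial_Ring.irreducible_def)
    have "b \<noteq> 0" "c \<noteq> 0" using bc a0 by auto
    hence db: "degree b > 0" "degree c > 0" using bc by (auto simp: is_unit_iff_degree)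
    have "degree a = degree b + degree c" using bc \<open>b \<noteq> 0\<close> \<open>c \<noteq> 0\<close> by (simp add: degree_mult_eq)
    hence "degree b < degree a" using db by simp
    then obtain P where "irreducible P" "P dvd b" using less.hyps db by blast
    thus ?thesis using bc by auto
  qed
qed

lemma L_pt_diff: "L g (a - b) = L g a - L g b" for g :: "'a::{finite,field} poly"
  unfolding L_def LS_def by (simp add: frob_pow_diff sum_subtractf algebra_simps)

lemma L_frob: "L g (z ^ (CARD('a) ^ k)) = (L g z) ^ (CARD('a) ^ k)" for g :: "'a::{finite,field} poly"
  by (metis E_frob E_linearized)

lemma sqfree_H:
  fixes P g :: "'a::{finite,field} poly"
  assumes irr: "irreducible P" and n: "n \<ge> 1"
    and dg: "pderiv g = [:d:]" and d0: "d \<noteq> 0"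
    and dv: "P * P dvd pcompose (monom 1 (CARD('a) ^ n) - [:0,1:]) g"
  shows False
proof -
  define H where "H = pcompose (monom 1 (CARD('a) ^ n) - [:0,1:]) g"
  have "of_nat (CARD('a) ^ n) = (0::'a)" using n by (simp add: of_nat_card_zero)
  hence "pderiv (monom (1::'a) (CARD('a) ^ n) - [:0,1:]) = -1"
    by (simp add: pderiv_diff pderiv_monom pderiv_pCons power_0_left one_pCons)
  moreover have "pcompose (-1::'a poly) g = [:-1:]"
  proof -
    have "(-1::'a poly) = [:-1:]" by (simp add: one_pCons)
    thus ?thesis by (simp add: pcompose_pCons)
  qed
  ultimately have pH: "pderiv H = [:-d:]" unfolding H_def using dg by (simp add: pderiv_pcompose)
  from dv obtain Q where HQ: "H = P * P * Q" unfolding H_def by (auto elim: dvdE)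
  have "pderiv H = P * pderiv (P * Q) + (P * Q) * pderiv P" unfolding HQ
    by (simp add: pderiv_mult mult.assoc)
  hence "P dvd pderiv H" by simp
  hence "P dvd [:-d:]" using pH by simp
  moreover have "is_unit [:-d:]" using d0 by (simp add: is_unit_triv)
  ultimately have "is_unit P" by (rule dvd_unit_imp_unit)
  thus False using irr by (simp add: irreducible_not_unit)
qed

theorem mainTheorem8:
  fixes lbar f :: "'a::{finite,field} poly" and m n i :: nat
  assumes "m \<ge> 1" and "n \<ge> 1"
    and "coprime n (CARD('a) ^ m - 1)"
    and "primitive_poly m lbar"
    and "lbar \<noteq> [:-1, 1:]"
    and "irreducible f" and "degree f = n"
    and "i < n"
    and "(\<Sum>u\<le>(m + 1) div n. coeff lbar (i + n * u)) \<noteq> 0"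
    and "\<forall>j<n. j \<noteq> i \<longrightarrow> (\<Sum>u\<le>(m + 1) div n. coeff lbar (j + n * u)) = 0"
  shows "degree (pcompose f (smult (inverse (\<Sum>u\<le>(m + 1) div n. coeff lbar (i + n * u)))
                    (linearized lbar)) div f) = n * (CARD('a) ^ m - 1)
       \<and> irreducible (pcompose f (smult (inverse (\<Sum>u\<le>(m + 1) div n. coeff lbar (i + n * u)))
                    (linearized lbar)) div f)"
proof -
  note m1 = assms(1) and n1 = assms(2) and cop = assms(3) and prim = assms(4)
    and irrf = assms(6) and degf = assms(7) and ii = assms(8) and c0' = assms(9) and cz = assms(10)
  define c where "c = (\<Sum>u\<le>(m + 1) div n. coeff lbar (i + n * u))"
  define l where "l = linearized lbar"
  define g where "g = smult (inverse c) l"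
  define G where "G = pcompose f g"
  define F where "F = G div f"
  define N where "N = n * (CARD('a) ^ m - 1)"
  define Xp where "Xp = [:0, 1::'a:]"
  have c0: "c \<noteq> 0" using c0' c_def by simp
  have lc: "lead_coeff lbar = 1" and dl: "degree lbar = m" and irrl: "irreducible lbar"
    and XM: "Xp ^ (CARD('a) ^ m - 1) mod lbar = 1"
    using prim unfolding primitive_poly_def Xp_def by auto
  have q2: "CARD('a) \<ge> 2" by (rule card_ge2)
  have qm: "CARD('a) ^ m \<ge> 2"
  proof -
    have "CARD('a) ^ 1 \<le> CARD('a) ^ m" using m1 q2 by (intro power_increasing) auto
    thus ?thesis using q2 by simp
  qed
  have N1: "N \<ge> 1" unfolding N_def using n1 qm by simp
  have rg: "L lbar z = to_ac c * z ^ (CARD('a) ^ i)" if "z ^ (CARD('a) ^ n) = z" for z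
    unfolding c_def using regroup[OF dl n1 ii _ that] cz by simp
  have Eg: "E g z = to_ac (inverse c) * L lbar z" for z
    unfolding g_def l_def by (simp add: E_smult E_linearized)
  have cc: "inverse (to_ac c) * to_ac c = 1" using c0 by simp
  have dg: "degree g = CARD('a) ^ m" unfolding g_def l_def using c0 degree_linearized[OF lc] dl by simp
  obtain \<gamma> where E\<gamma>: "E f \<gamma> = 0" using E_root_exists[of f] degf n1 by auto
  have p\<gamma>: "\<gamma> ^ (CARD('a) ^ n) = \<gamma>" using lemmaA[OF irrf degf E\<gamma>] .
  have fG: "f dvd G"
  proof (rule irr_root_dvd[OF irrf E\<gamma>])
    have "E G \<gamma> = E f (to_ac (inverse c) * (to_ac c * \<gamma> ^ (CARD('a) ^ i)))"
      unfolding G_def by (simp add: E_pcompose Eg rg[OF p\<gamma>])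
    also have "\<dots> = E f (\<gamma> ^ (CARD('a) ^ i))" by (simp add: mult.assoc[symmetric] cc)
    also have "\<dots> = (E f \<gamma>) ^ (CARD('a) ^ i)" by (simp add: E_frob)
    finally show "E G \<gamma> = 0" using E\<gamma> by simp
  qed
  have GF: "G = F * f" unfolding F_def using fG by simp
  have degG: "degree G = n * CARD('a) ^ m" unfolding G_def by (simp add: degree_pcompose dg degf)
  have G0: "G \<noteq> 0" using degG n1 by (intro notI) simp
  have F0: "F \<noteq> 0" using G0 GF by auto
  have f0: "f \<noteq> 0" using irrf by auto
  have degF: "degree F = N"
  proof -
    have "degree G = degree F + n" using GF F0 f0 degf by (simp add: degree_mult_eq)
    thus ?thesis unfolding N_def using degG by (simp add: diff_mult_distrib2)
  qed
  define Hp where "Hp = monom (1::'a) (CARD('a) ^ n) - [:0,1:]"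
  have fH: "f dvd Hp"
  proof (rule irr_root_dvd[OF irrf E\<gamma>])
    show "E Hp \<gamma> = 0" unfolding Hp_def using p\<gamma> by (simp add: E_diff E_monom E_X)
  qed
  have GH: "G dvd pcompose Hp g"
  proof -
    obtain w where "Hp = f * w" using fH by (auto elim: dvdE)
    hence "pcompose Hp g = G * pcompose w g" unfolding G_def by (simp add: pcompose_mult)
    thus ?thesis by simp
  qed
  have b0: "coeff lbar 0 \<noteq> 0"
  proof
    assume "coeff lbar 0 = 0"
    hence "[:-0, 1:] dvd lbar" by (simp add: dvd_iff_poly_eq_0 poly_0_coeff_0)
    hence Xl: "Xp dvd lbar" unfolding Xp_def by simp
    have one: "1 mod lbar = (1::'a poly)" using dl m1 by (intro mod_poly_less) simp
    have "lbar dvd Xp ^ (CARD('a) ^ m - 1) - 1" using XM one by (simp add: mod_eq_dvd_iff[symmetric])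
    hence h1: "Xp dvd Xp ^ (CARD('a) ^ m - 1) - 1" using Xl by (rule dvd_trans[rotated])
    have h2: "Xp dvd Xp ^ (CARD('a) ^ m - 1)" using qm by (intro dvd_power) auto
    have h: "Xp dvd Xp ^ (CARD('a) ^ m - 1) - (Xp ^ (CARD('a) ^ m - 1) - 1)"
      by (rule dvd_diff[OF h2 h1])
    have eq: "Xp ^ (CARD('a) ^ m - 1) - (Xp ^ (CARD('a) ^ m - 1) - 1) = (1::'a poly)" by simp
    from h have "Xp dvd 1" unfolding eq .
    thus False unfolding Xp_def by (simp add: is_unit_iff_degree)
  qed
  have pg: "pderiv g = [:inverse c * coeff lbar 0:]"
    unfolding g_def l_def by (simp add: pderiv_smult pderiv_linearized)
  have d0: "inverse c * coeff lbar 0 \<noteq> 0" using c0 b0 by simp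
  have key: "N \<le> degree P" if irrP: "irreducible P" and PF: "P dvd F" for P
  proof -
    obtain r where Pr: "E P r = 0" using E_root_exists[of P] irr_degree_pos[OF irrP] by auto
    have Fr: "E F r = 0" using PF Pr by (auto elim!: dvdE simp: E_mult)
    have Gr: "E G r = 0" using GF Fr by (simp add: E_mult)
    define \<gamma> where "\<gamma> = E g r"
    have Ef: "E f \<gamma> = 0" using Gr unfolding G_def \<gamma>_def by (simp add: E_pcompose)
    have p\<gamma>: "\<gamma> ^ (CARD('a) ^ n) = \<gamma>" using lemmaA[OF irrf degf Ef] .
    define \<gamma>0 where "\<gamma>0 = \<gamma> ^ (CARD('a) ^ (n - i))"
    have Ef0: "E f \<gamma>0 = 0" unfolding \<gamma>0_def using E_frob[of f \<gamma> "n - i"] Ef by (simp add: power_0_left)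
    have shift: "(\<gamma>0) ^ (CARD('a) ^ k) = (\<gamma> ^ (CARD('a) ^ k)) ^ (CARD('a) ^ (n - i))" for k
      unfolding \<gamma>0_def using pow_pow_card[of \<gamma> "n - i" k, where 'a='a] pow_pow_card[of \<gamma> k "n - i", where 'a='a]
      by (simp add: add.commute)
    have p0: "\<gamma>0 ^ (CARD('a) ^ n) = \<gamma>0" using shift[of n] p\<gamma> unfolding \<gamma>0_def by simp
    have \<gamma>0i: "\<gamma>0 ^ (CARD('a) ^ i) = \<gamma>"
      unfolding \<gamma>0_def using pow_pow_card[of \<gamma> "n - i" i, where 'a='a] ii p\<gamma> by simp
    have L0: "L lbar \<gamma>0 = to_ac c * \<gamma>" using rg[OF p0] \<gamma>0i by simp
    have Lr: "L lbar r = to_ac c * \<gamma>"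
    proof -
      have "to_ac c * \<gamma> = (to_ac (inverse c) * to_ac c) * L lbar r"
        unfolding \<gamma>_def Eg by (simp add: mult_ac)
      thus ?thesis using cc by simp
    qed
    define v where "v = r - \<gamma>0"
    have Lv: "L lbar v = 0" unfolding v_def using L0 Lr by (simp add: L_pt_diff)
    have v0: "v \<noteq> 0"
    proof
      assume "v = 0"
      hence "r = \<gamma>0" unfolding v_def by simp
      hence "E f r = 0" using Ef0 by simp
      hence "P dvd f" using irr_root_dvd[OF irrP Pr] by blast
      hence "P * P dvd F * f" using PF by (intro mult_dvd_mono)
      hence "P * P dvd pcompose Hp g" using GH GF by (metis dvd_trans)
      thus False using sqfree_H[OF irrP n1 pg d0] unfolding Hp_def by blast
    qed
    have per: "N \<le> k" if k0: "0 < k" and rk: "r ^ (CARD('a) ^ k) = r" for k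
    proof -
      have "\<gamma> ^ (CARD('a) ^ k) = \<gamma>" unfolding \<gamma>_def using E_frob[of g r k] rk by simp
      hence g0k: "\<gamma>0 ^ (CARD('a) ^ k) = \<gamma>0" using shift[of k] unfolding \<gamma>0_def by simp
      have "v ^ (CARD('a) ^ k) = v" unfolding v_def using rk g0k by (simp add: frob_pow_diff)
      hence "lbar dvd monom 1 k - 1" by (rule module_dvd[OF irrl v0 Lv])
      hence d1: "(CARD('a) ^ m - 1) dvd k" by (rule prim_order[OF prim m1])
      have d2: "n dvd k" by (rule period_dvd[OF irrf degf Ef0 g0k k0])
      have "N dvd k" unfolding N_def using divides_mult[OF d2 d1 cop] .
      thus ?thesis using k0 by (simp add: dvd_imp_le)
    qed
    have neq: "r ^ (CARD('a) ^ a) \<noteq> r ^ (CARD('a) ^ b)" if ab: "a < b" "b < N" for a b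
    proof
      assume eq: "r ^ (CARD('a) ^ a) = r ^ (CARD('a) ^ b)"
      have "r ^ (CARD('a) ^ b) = (r ^ (CARD('a) ^ (b - a))) ^ (CARD('a) ^ a)"
        using pow_pow_card[of r "b - a" a, where 'a='a] ab by simp
      hence "r ^ (CARD('a) ^ (b - a)) = r" using eq frob_pow_inj by metis
      hence "N \<le> b - a" using per ab by simp
      thus False using ab by simp
    qed
    have inj: "inj_on (\<lambda>j. r ^ (CARD('a) ^ j)) {..<N}"
    proof (rule inj_onI)
      fix a b assume "a \<in> {..<N}" "b \<in> {..<N}" "r ^ (CARD('a) ^ a) = r ^ (CARD('a) ^ b)"
      thus "a = b" using neq[of a b] neq[of b a] by (cases a b rule: linorder_cases) auto
    qed
    define MP where "MP = map_poly to_ac P"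
    have P0: "P \<noteq> 0" using irrP by auto
    have MP0: "MP \<noteq> 0"
    proof
      assume "MP = 0"
      hence "coeff MP (degree P) = 0" by simp
      thus False using P0 unfolding MP_def by (simp add: coeff_map_poly)
    qed
    have sub: "(\<lambda>j. r ^ (CARD('a) ^ j)) ` {..<N} \<subseteq> {z. poly MP z = 0}"
    proof
      fix z assume "z \<in> (\<lambda>j. r ^ (CARD('a) ^ j)) ` {..<N}"
      then obtain j where "z = r ^ (CARD('a) ^ j)" by auto
      hence "E P z = 0" using E_frob[of P r j] Pr by (simp add: power_0_left)
      thus "z \<in> {z. poly MP z = 0}" unfolding MP_def E_def by simp
    qed
    have "N = card ((\<lambda>j. r ^ (CARD('a) ^ j)) ` {..<N})" using card_image[OF inj] by simp
    also have "\<dots> \<le> card {z. poly MP z = 0}" by (rule card_mono[OF poly_roots_finite[OF MP0] sub])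
    also have "\<dots> \<le> degree MP" by (rule card_poly_roots_bound[OF MP0])
    also have "\<dots> = degree P" unfolding MP_def by (rule degree_map_to_ac)
    finally show ?thesis .
  qed
  have irrF: "irreducible F"
  proof (rule Factorial_Ring.irreducibleI)
    show "F \<noteq> 0" by (rule F0)
    show "\<not> is_unit F" using F0 degF N1 by (simp add: is_unit_iff_degree)
    fix a b assume Fab: "F = a * b"
    show "is_unit a \<or> is_unit b"
    proof (rule ccontr)
      assume nu: "\<not> (is_unit a \<or> is_unit b)"
      have "a \<noteq> 0" "b \<noteq> 0" using Fab F0 by auto
      hence da: "degree a > 0" and db: "degree b > 0" using nu by (auto simp: is_unit_iff_degree)
      obtain P where P: "irreducible P" "P dvd a" using exists_irr_factor[OF da] by blast
      have "P dvd F" using P Fab by simp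
      hence "N \<le> degree P" using key P by blast
      also have "\<dots> \<le> degree a" using P \<open>a \<noteq> 0\<close> by (intro dvd_imp_degree_le) auto
      finally have "N \<le> degree a" .
      moreover have "degree F = degree a + degree b" using Fab \<open>a \<noteq> 0\<close> \<open>b \<noteq> 0\<close> by (simp add: degree_mult_eq)
      ultimately show False using degF db by simp
    qed
  qed
  have "degree F = N \<and> irreducible F" using degF irrF by simp
  thus ?thesis unfolding F_def G_def g_def l_def c_def N_def .
qed

end
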